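(* In the setting of the backward and forward Euler schemes for a single-station $M/M/m$ queue (defined in the context), for every $\tau\ge1$ the pairs $(N^b_\tau,D^b_{\tau+1})$ and $(N^f_{\tau-1}+A_\tau,D^f_\tau)$ are identical in distribution; consequently $E[N^b_\tau]-E[N^f_\tau]=E[D^f_\tau]$ for every $\tau\ge1$.
   Context: Fix $m\ge1$, $\mu>0$, $\lambda>0$, $h>0$. For integer $x\ge0$, "$D\sim\mathrm{GenerateDeparture}(x,m,\mu,h)$" means $D$ has the law of the number of departures during $[0,h]$ of a pure departure process started from $x$ customers, i.e. a continuous-time Markov chain on $\{0,1,\dots\}$ jumping from $y$ to $y-1$ at rate $\min(y,m)\mu$. Let $A_1,A_2,\dots$ be i.i.d. $\mathrm{Poisson}(\lambda h)$. Backward scheme: $N^b_0=0$ and $N^b_\tau=N^b_{\tau-1}+A_\tau-D^b_\tau$, where conditionally on all previously generated quantities and $A_\tau$, $D^b_\tau\sim\mathrm{GenerateDeparture}(N^b_{\tau-1},m,\mu,h)$. Forward scheme: $N^f_0=0$ and $N^f_\tau=N^f_{\tau-1}+A_\tau-D^f_\tau$, where conditionally on all previously generated quantities and $A_\tau$, $D^f_\tau\sim\mathrm{GenerateDeparture}(N^f_{\tau-1}+A_\tau,m,\mu,h)$. *)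

theory Defs
  imports "HOL-Probability.Probability"
begin

text \<open>The pure departure process started from x customers jumps y -> y-1 at rate
  min(y,m) mu. It is constructed in the standard way from independent exponential
  holding times: the i-th departure (i = 1..x) occurs when the chain is in state
  x - i + 1, so its holding time T_i is exponential with rate min(x-i+1, m) mu.\<close>

definition dep_rate :: "nat \<Rightarrow> real \<Rightarrow> nat \<Rightarrow> nat \<Rightarrow> real" where
  "dep_rate m mu x i = real (min (x + 1 - i) m) * mu"

definition holding_times :: "nat \<Rightarrow> real \<Rightarrow> nat \<Rightarrow> (nat \<Rightarrow> real) measure" where
  "holding_times m mu x =
     PiM {1..x} (\<lambda>i. density lborel (exponential_density (dep_rate m mu x i)))"

definition departures_by :: "real \<Rightarrow> nat \<Rightarrow> (nat \<Rightarrow> real) \<Rightarrow> nat" where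
  "departures_by h x T = card {k \<in> {1..x}. (\<Sum>i = 1..k. T i) \<le> h}"

definition departure_law :: "nat \<Rightarrow> nat \<Rightarrow> real \<Rightarrow> real \<Rightarrow> nat measure" where
  "departure_law x m mu h = distr (holding_times m mu x) (count_space UNIV) (departures_by h x)"

definition GenerateDeparture :: "nat \<Rightarrow> nat \<Rightarrow> real \<Rightarrow> real \<Rightarrow> nat pmf" where
  "GenerateDeparture x m mu h = embed_pmf (\<lambda>k. measure (departure_law x m mu h) {k})"

text \<open>A trajectory of length t is the list [(A_1,D_1,N_1), ..., (A_t,D_t,N_t)].\<close>

type_synonym traj = "(nat \<times> nat \<times> nat) list"

definition N_at :: "traj \<Rightarrow> nat \<Rightarrow> nat" where
  "N_at tr t = (if t = 0 then 0 else snd (snd (tr ! (t - 1))))"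

definition A_at :: "traj \<Rightarrow> nat \<Rightarrow> nat" where
  "A_at tr t = fst (tr ! (t - 1))"

definition D_at :: "traj \<Rightarrow> nat \<Rightarrow> nat" where
  "D_at tr t = fst (snd (tr ! (t - 1)))"

fun backward_traj :: "nat \<Rightarrow> real \<Rightarrow> real \<Rightarrow> real \<Rightarrow> nat \<Rightarrow> traj pmf" where
  "backward_traj m mu lam h 0 = return_pmf []"
| "backward_traj m mu lam h (Suc t) =
     bind_pmf (backward_traj m mu lam h t) (\<lambda>tr.
     bind_pmf (poisson_pmf (lam * h)) (\<lambda>a.
     bind_pmf (GenerateDeparture (N_at tr t) m mu h) (\<lambda>d.
     return_pmf (tr @ [(a, d, N_at tr t + a - d)]))))"

fun forward_traj :: "nat \<Rightarrow> real \<Rightarrow> real \<Rightarrow> real \<Rightarrow> nat \<Rightarrow> traj pmf" where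
  "forward_traj m mu lam h 0 = return_pmf []"
| "forward_traj m mu lam h (Suc t) =
     bind_pmf (forward_traj m mu lam h t) (\<lambda>tr.
     bind_pmf (poisson_pmf (lam * h)) (\<lambda>a.
     bind_pmf (GenerateDeparture (N_at tr t + a) m mu h) (\<lambda>d.
     return_pmf (tr @ [(a, d, N_at tr t + a - d)]))))"

end

theory Submission
  imports Defs
begin


lemma holding_prob:
  assumes "m \<ge> 1" "mu > 0"
  shows "prob_space (holding_times m mu x)"
  unfolding holding_times_def
proof (rule prob_space_PiM)
  fix i assume "i \<in> {1..x}"
  then have "dep_rate m mu x i > 0" using assms by (auto simp: dep_rate_def)
  then show "prob_space (density lborel (exponential_density (dep_rate m mu x i)))"
    by (rule prob_space_exponential_density)
qed

lemma departures_meas: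
  "departures_by h x \<in> measurable (holding_times m mu x) (count_space UNIV)"
  unfolding departures_by_def
proof (rule measurable_card)
  fix k
  show "{T \<in> space (holding_times m mu x). k \<in> {k \<in> {1..x}. (\<Sum>i = 1..k. T i) \<le> h}}
        \<in> sets (holding_times m mu x)"
  proof (cases "k \<in> {1..x}")
    case False
    then have "{T \<in> space (holding_times m mu x). k \<in> {k \<in> {1..x}. (\<Sum>i = 1..k. T i) \<le> h}} = {}"
      by blast
    then show ?thesis by (simp only: sets.empty_sets)
  next
    case True
    have "(\<lambda>T. \<Sum>i = 1..k. T i) \<in> borel_measurable (holding_times m mu x)"
      unfolding holding_times_def
    proof (rule borel_measurable_sum)
      fix i assume "i \<in> {1..k}"
      then have "i \<in> {1..x}" using True by auto
      then show "(\<lambda>T. T i) \<in> borel_measurable (PiM {1..x} (\<lambda>i. density lborel (exponential_density (dep_rate m mu x i))))"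
        using measurable_component_singleton[OF \<open>i \<in> {1..x}\<close>, of "\<lambda>i. density lborel (exponential_density (dep_rate m mu x i))"]
        by (simp only: measurable_density_eq2 measurable_lborel1)
    qed
    then have *: "{T \<in> space (holding_times m mu x). (\<Sum>i = 1..k. T i) \<le> h} \<in> sets (holding_times m mu x)"
      unfolding borel_measurable_iff_le by blast
    have "{T \<in> space (holding_times m mu x). k \<in> {k \<in> {1..x}. (\<Sum>i = 1..k. T i) \<le> h}}
        = {T \<in> space (holding_times m mu x). (\<Sum>i = 1..k. T i) \<le> h}"
      using True by blast
    then show ?thesis using * by (simp only:)
  qed
qed

lemma departure_law_prob:
  assumes "m \<ge> 1" "mu > 0"
  shows "prob_space (departure_law x m mu h)"
  unfolding departure_law_def
  by (rule prob_space.prob_space_distr[OF holding_prob[OF assms] departures_meas])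

lemma pmf_GD:
  assumes "m \<ge> 1" "mu > 0"
  shows "pmf (GenerateDeparture x m mu h) k = measure (departure_law x m mu h) {k}"
proof -
  interpret p: prob_space "departure_law x m mu h" by (rule departure_law_prob[OF assms])
  have sets: "sets (departure_law x m mu h) = sets (count_space UNIV)"
    by (simp add: departure_law_def)
  have "(\<integral>\<^sup>+k. ennreal (measure (departure_law x m mu h) {k}) \<partial>count_space UNIV)
      = (\<integral>\<^sup>+k. emeasure (departure_law x m mu h) {k} \<partial>count_space UNIV)"
    by (simp add: p.emeasure_eq_measure)
  also have "\<dots> = emeasure (departure_law x m mu h) UNIV"
    by (rule emeasure_countable_singleton[symmetric]) (auto simp: sets)
  also have "\<dots> = 1"
    using p.emeasure_space_1 by (simp add: departure_law_def space_distr)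
  finally have "(\<integral>\<^sup>+k. ennreal (measure (departure_law x m mu h) {k}) \<partial>count_space UNIV) = 1" .
  then show ?thesis unfolding GenerateDeparture_def
    by (rule pmf_embed_pmf[OF measure_nonneg])
qed

lemma GD_le:
  assumes "m \<ge> 1" "mu > 0" "d \<in> set_pmf (GenerateDeparture x m mu h)"
  shows "d \<le> x"
proof (rule ccontr)
  assume "\<not> d \<le> x"
  interpret p: prob_space "holding_times m mu x" by (rule holding_prob[OF assms(1,2)])
  have le: "departures_by h x T \<le> x" for T
    unfolding departures_by_def
  proof -
    have "card {k \<in> {1..x}. (\<Sum>i = 1..k. T i) \<le> h} \<le> card {1..x}"
      by (rule card_mono) auto
    then show "card {k \<in> {1..x}. (\<Sum>i = 1..k. T i) \<le> h} \<le> x" by simp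
  qed
  have "departures_by h x -` {d} \<inter> space (holding_times m mu x) = {}"
    using le \<open>\<not> d \<le> x\<close> by (auto intro: le_trans)
  then have "measure (departure_law x m mu h) {d} = 0"
    unfolding departure_law_def
    by (subst measure_distr[OF departures_meas]) auto
  then show False using assms(3) pmf_GD[OF assms(1,2)]
    by (simp add: set_pmf_eq)
qed

lemma GD_0:
  assumes "m \<ge> 1" "mu > 0"
  shows "GenerateDeparture 0 m mu h = return_pmf 0"
proof -
  have "set_pmf (GenerateDeparture 0 m mu h) \<subseteq> {0}"
  proof
    fix d assume "d \<in> set_pmf (GenerateDeparture 0 m mu h)"
    then have "d \<le> 0" by (rule GD_le[OF assms])
    then show "d \<in> {0}" by simp
  qed
  then show ?thesis by (simp only: set_pmf_subset_singleton)
qed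



lemma poisson_mean_finite:
  fixes r :: real assumes r: "r > 0"
  shows "(\<integral>\<^sup>+a. ennreal (real a) \<partial>measure_pmf (poisson_pmf r)) < \<infinity>"
proof -
  let ?f = "\<lambda>a::nat. r ^ a / fact a * exp (-r) * real a"
  have s0: "summable (\<lambda>n::nat. r ^ n / fact n)" using summable_exp
    by (simp add: field_simps divide_inverse [symmetric])
  have eq: "?f (Suc n) = (r * exp (-r)) * (r ^ n / fact n)" for n
  proof -
    have "fact (Suc n) = (real (Suc n)) * (fact n :: real)" by (rule fact_Suc)
    moreover have "(fact n :: real) > 0" by simp
    ultimately show ?thesis by (simp add: field_simps del: of_nat_Suc)
  qed
  have "summable (\<lambda>n. ?f (Suc n))" unfolding eq by (intro summable_mult s0)
  then have s: "summable ?f" by (subst summable_Suc_iff[symmetric])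
  have nn: "\<And>a. 0 \<le> ?f a" using r by auto
  have "(\<integral>\<^sup>+a. ennreal (real a) \<partial>measure_pmf (poisson_pmf r))
      = (\<integral>\<^sup>+a. ennreal (?f a) \<partial>count_space UNIV)"
    using r by (simp add: nn_integral_measure_pmf ennreal_mult'[symmetric] mult.commute)
  also have "\<dots> = (\<Sum>a. ennreal (?f a))" by (rule nn_integral_count_space_nat)
  also have "\<dots> < \<infinity>" using s nn by (simp add: ennreal_suminf_neq_top less_top[symmetric])
  finally show ?thesis .
qed

lemma N_snoc: "k \<le> length tr \<Longrightarrow> N_at (tr @ [x]) k = N_at tr k"
  by (auto simp: N_at_def nth_append)
lemma N_last: "length tr = t \<Longrightarrow> N_at (tr @ [x]) (Suc t) = snd (snd x)"
  by (simp add: N_at_def nth_append)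
lemma A_last: "length tr = t \<Longrightarrow> A_at (tr @ [x]) (Suc t) = fst x"
  by (simp add: A_at_def nth_append)
lemma D_last: "length tr = t \<Longrightarrow> D_at (tr @ [x]) (Suc t) = fst (snd x)"
  by (simp add: D_at_def nth_append)

lemma len_b: "tr \<in> set_pmf (backward_traj m mu lam h t) \<Longrightarrow> length tr = t"
  by (induction t arbitrary: tr) auto
lemma len_f: "tr \<in> set_pmf (forward_traj m mu lam h t) \<Longrightarrow> length tr = t"
  by (induction t arbitrary: tr) auto

lemma Nb_Suc:
  "map_pmf (\<lambda>tr. N_at tr (Suc t)) (backward_traj m mu lam h (Suc t))
   = bind_pmf (map_pmf (\<lambda>tr. N_at tr t) (backward_traj m mu lam h t)) (\<lambda>n.
       bind_pmf (poisson_pmf (lam*h)) (\<lambda>a.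
       bind_pmf (GenerateDeparture n m mu h) (\<lambda>d. return_pmf (n + a - d))))"
  unfolding bind_map_pmf
  by (auto simp: map_bind_pmf N_last len_b intro!: bind_pmf_cong)

lemma Xf_Suc:
  "map_pmf (\<lambda>tr. N_at tr t + A_at tr (Suc t)) (forward_traj m mu lam h (Suc t))
   = bind_pmf (map_pmf (\<lambda>tr. N_at tr t) (forward_traj m mu lam h t)) (\<lambda>n.
       bind_pmf (poisson_pmf (lam*h)) (\<lambda>a. return_pmf (n + a)))"
  unfolding bind_map_pmf
  by (auto simp: map_bind_pmf N_snoc A_last len_f intro!: bind_pmf_cong)

lemma Nf_Suc:
  "map_pmf (\<lambda>tr. N_at tr (Suc t)) (forward_traj m mu lam h (Suc t))
   = bind_pmf (map_pmf (\<lambda>tr. N_at tr t + A_at tr (Suc t)) (forward_traj m mu lam h (Suc t))) (\<lambda>x.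
       bind_pmf (GenerateDeparture x m mu h) (\<lambda>d. return_pmf (x - d)))"
  unfolding Xf_Suc bind_map_pmf bind_assoc_pmf bind_return_pmf
  by (auto simp: map_bind_pmf N_last len_f intro!: bind_pmf_cong)

lemma Jb:
  "map_pmf (\<lambda>tr. (N_at tr t, D_at tr (Suc t))) (backward_traj m mu lam h (Suc t))
   = bind_pmf (map_pmf (\<lambda>tr. N_at tr t) (backward_traj m mu lam h t)) (\<lambda>n.
       bind_pmf (GenerateDeparture n m mu h) (\<lambda>d. return_pmf (n, d)))"
proof -
  have "map_pmf (\<lambda>tr. (N_at tr t, D_at tr (Suc t))) (backward_traj m mu lam h (Suc t))
    = bind_pmf (backward_traj m mu lam h t) (\<lambda>tr. bind_pmf (poisson_pmf (lam*h)) (\<lambda>a.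
        bind_pmf (GenerateDeparture (N_at tr t) m mu h) (\<lambda>d. return_pmf (N_at tr t, d))))"
    unfolding backward_traj.simps map_bind_pmf map_return_pmf
    by (intro bind_pmf_cong[OF refl]) (simp add: N_snoc D_last len_b)
  then show ?thesis by (simp add: bind_map_pmf)
qed


lemma Jf:
  "map_pmf (\<lambda>tr. (N_at tr t + A_at tr (Suc t), D_at tr (Suc t))) (forward_traj m mu lam h (Suc t))
   = bind_pmf (map_pmf (\<lambda>tr. N_at tr t + A_at tr (Suc t)) (forward_traj m mu lam h (Suc t))) (\<lambda>x.
       bind_pmf (GenerateDeparture x m mu h) (\<lambda>d. return_pmf (x, d)))"
  unfolding Xf_Suc bind_map_pmf bind_assoc_pmf bind_return_pmf
  by (auto simp: map_bind_pmf N_snoc A_last D_last len_f intro!: bind_pmf_cong)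



lemma law_eq:
  assumes "m \<ge> 1" "mu > 0"
  shows "map_pmf (\<lambda>tr. N_at tr (Suc t)) (backward_traj m mu lam h (Suc t))
       = map_pmf (\<lambda>tr. N_at tr t + A_at tr (Suc t)) (forward_traj m mu lam h (Suc t))"
proof (induction t)
  case 0
  show ?case unfolding Nb_Suc Xf_Suc
    by (simp add: GD_0[OF assms] N_at_def bind_return_pmf)
next
  case (Suc t)
  let ?X = "map_pmf (\<lambda>tr. N_at tr t + A_at tr (Suc t)) (forward_traj m mu lam h (Suc t))"
  have 1: "map_pmf (\<lambda>tr. N_at tr (Suc (Suc t))) (backward_traj m mu lam h (Suc (Suc t)))
     = bind_pmf ?X (\<lambda>n. bind_pmf (poisson_pmf (lam*h)) (\<lambda>a.
       bind_pmf (GenerateDeparture n m mu h) (\<lambda>d. return_pmf (n + a - d))))"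
    by (simp only: Nb_Suc[where t="Suc t"] Suc.IH)
  have 2: "map_pmf (\<lambda>tr. N_at tr (Suc t) + A_at tr (Suc (Suc t))) (forward_traj m mu lam h (Suc (Suc t)))
     = bind_pmf ?X (\<lambda>x. bind_pmf (GenerateDeparture x m mu h) (\<lambda>d. bind_pmf (poisson_pmf (lam*h)) (\<lambda>a. return_pmf (x - d + a))))"
    by (simp only: Xf_Suc[where t="Suc t"] Nf_Suc[where t=t] bind_assoc_pmf bind_return_pmf)
  show ?case unfolding 1 2
  proof (rule bind_pmf_cong[OF refl])
    fix x
    show "bind_pmf (poisson_pmf (lam * h)) (\<lambda>a. bind_pmf (GenerateDeparture x m mu h) (\<lambda>d. return_pmf (x + a - d)))
        = bind_pmf (GenerateDeparture x m mu h) (\<lambda>d. bind_pmf (poisson_pmf (lam * h)) (\<lambda>a. return_pmf (x - d + a)))"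
      apply (subst bind_commute_pmf)
      apply (rule bind_pmf_cong[OF refl])
      apply (rule bind_pmf_cong[OF refl])
      using GD_le[OF assms] by simp
  qed
qed

lemma Nb_nn_bound:
  assumes "m \<ge> 1" "mu > 0"
  shows "(\<integral>\<^sup>+n. ennreal (real n) \<partial>measure_pmf (map_pmf (\<lambda>tr. N_at tr t) (backward_traj m mu lam h t)))
     \<le> of_nat t * (\<integral>\<^sup>+a. ennreal (real a) \<partial>measure_pmf (poisson_pmf (lam*h)))"
  (is "?I t \<le> _ * ?C")
proof (induction t)
  case 0
  then show ?case by (simp add: N_at_def)
next
  case (Suc t)
  let ?Nb = "map_pmf (\<lambda>tr. N_at tr t) (backward_traj m mu lam h t)"
  have "?I (Suc t) = (\<integral>\<^sup>+n. \<integral>\<^sup>+a. \<integral>\<^sup>+d. ennreal (real (n + a - d))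
          \<partial>measure_pmf (GenerateDeparture n m mu h) \<partial>measure_pmf (poisson_pmf (lam*h)) \<partial>measure_pmf ?Nb)"
    unfolding Nb_Suc by simp
  also have "\<dots> \<le> (\<integral>\<^sup>+n. \<integral>\<^sup>+a. (ennreal (real n) + ennreal (real a))
          \<partial>measure_pmf (poisson_pmf (lam*h)) \<partial>measure_pmf ?Nb)"
  proof (intro nn_integral_mono)
    fix n a
    have "(\<integral>\<^sup>+d. ennreal (real (n + a - d)) \<partial>measure_pmf (GenerateDeparture n m mu h))
       \<le> (\<integral>\<^sup>+d. (ennreal (real n) + ennreal (real a)) \<partial>measure_pmf (GenerateDeparture n m mu h))"
      by (intro nn_integral_mono) (simp add: ennreal_plus[symmetric] del: ennreal_plus)
    also have "\<dots> = ennreal (real n) + ennreal (real a)"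
      by (simp add: measure_pmf.emeasure_space_1)
    finally show "(\<integral>\<^sup>+d. ennreal (real (n + a - d)) \<partial>measure_pmf (GenerateDeparture n m mu h))
       \<le> ennreal (real n) + ennreal (real a)" .
  qed
  also have "\<dots> = (\<integral>\<^sup>+n. (ennreal (real n) + ?C) \<partial>measure_pmf ?Nb)"
    by (simp add: nn_integral_add measure_pmf.emeasure_space_1)
  also have "\<dots> = ?I t + ?C"
    by (simp add: nn_integral_add measure_pmf.emeasure_space_1)
  also have "\<dots> \<le> of_nat t * ?C + ?C" using Suc.IH by (intro add_right_mono)
  also have "\<dots> = of_nat (Suc t) * ?C" by (simp add: algebra_simps)
  finally show ?case .
qed

lemma Nb_integrable:
  assumes "m \<ge> 1" "mu > 0" "lam * h > 0"
  shows "integrable (measure_pmf (map_pmf (\<lambda>tr. N_at tr t) (backward_traj m mu lam h t))) (\<lambda>n. real n)"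
proof -
  have "(\<integral>\<^sup>+n. ennreal (real n) \<partial>measure_pmf (map_pmf (\<lambda>tr. N_at tr t) (backward_traj m mu lam h t))) < \<infinity>"
  proof -
    have C: "(\<integral>\<^sup>+a. ennreal (real a) \<partial>measure_pmf (poisson_pmf (lam*h))) < \<infinity>"
      by (rule poisson_mean_finite[OF assms(3)])
    have "of_nat t * (\<integral>\<^sup>+a. ennreal (real a) \<partial>measure_pmf (poisson_pmf (lam*h))) < \<infinity>"
      using C by (simp add: ennreal_mult_less_top of_nat_less_top)
    then show ?thesis using Nb_nn_bound[OF assms(1,2), of t lam h] by (rule le_less_trans[rotated])
  qed
  then show ?thesis by (simp add: integrable_iff_bounded)
qed

lemma struct_f:
  assumes "m \<ge> 1" "mu > 0" "tr \<in> set_pmf (forward_traj m mu lam h (Suc t))"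
  shows "N_at tr (Suc t) = N_at tr t + A_at tr (Suc t) - D_at tr (Suc t)
       \<and> D_at tr (Suc t) \<le> N_at tr t + A_at tr (Suc t)"
  using assms(3) GD_le[OF assms(1,2)]
  by (auto simp: N_snoc N_last A_last D_last len_f)



theorem mainTheorem4:
  fixes m :: nat and mu lam h :: real and \<tau> :: nat
  assumes "m \<ge> 1" and "mu > 0" and "lam > 0" and "h > 0" and "\<tau> \<ge> 1"
  shows "map_pmf (\<lambda>tr. (N_at tr \<tau>, D_at tr (\<tau> + 1))) (backward_traj m mu lam h (\<tau> + 1))
           = map_pmf (\<lambda>tr. (N_at tr (\<tau> - 1) + A_at tr \<tau>, D_at tr \<tau>)) (forward_traj m mu lam h \<tau>)
       \<and> measure_pmf.expectation (backward_traj m mu lam h \<tau>) (\<lambda>tr. real (N_at tr \<tau>))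
           - measure_pmf.expectation (forward_traj m mu lam h \<tau>) (\<lambda>tr. real (N_at tr \<tau>))
         = measure_pmf.expectation (forward_traj m mu lam h \<tau>) (\<lambda>tr. real (D_at tr \<tau>))"
proof -
  obtain t where tau: "\<tau> = Suc t" using assms(5) by (cases \<tau>) auto
  have lh: "lam * h > 0" using assms(3,4) by simp
  let ?F = "forward_traj m mu lam h (Suc t)"
  let ?X = "\<lambda>tr. N_at tr t + A_at tr (Suc t)"
  let ?D = "\<lambda>tr. D_at tr (Suc t)"
  have law: "map_pmf (\<lambda>tr. N_at tr (Suc t)) (backward_traj m mu lam h (Suc t)) = map_pmf ?X ?F"
    by (rule law_eq[OF assms(1,2)])
  have p1: "map_pmf (\<lambda>tr. (N_at tr (Suc t), D_at tr (Suc (Suc t)))) (backward_traj m mu lam h (Suc (Suc t)))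
      = map_pmf (\<lambda>tr. (N_at tr t + A_at tr (Suc t), D_at tr (Suc t))) ?F"
    by (simp only: Jb[where t="Suc t"] law Jf[where t=t])
  have intX': "integrable (measure_pmf (map_pmf ?X ?F)) (\<lambda>n. real n)"
    using Nb_integrable[OF assms(1,2) lh, of "Suc t"] unfolding law .
  have intX: "integrable (measure_pmf ?F) (\<lambda>tr. real (?X tr))"
    using intX' by simp
  have st: "\<And>tr. tr \<in> set_pmf ?F \<Longrightarrow> N_at tr (Suc t) = ?X tr - ?D tr \<and> ?D tr \<le> ?X tr"
    using struct_f[OF assms(1,2)] by blast
  have intD: "integrable (measure_pmf ?F) (\<lambda>tr. real (?D tr))"
    by (rule Bochner_Integration.integrable_bound[OF intX]) (auto intro!: AE_pmfI dest: st)
  have Eb: "measure_pmf.expectation (backward_traj m mu lam h (Suc t)) (\<lambda>tr. real (N_at tr (Suc t)))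
      = measure_pmf.expectation ?F (\<lambda>tr. real (?X tr))"
  proof -
    have "measure_pmf.expectation (backward_traj m mu lam h (Suc t)) (\<lambda>tr. real (N_at tr (Suc t)))
        = measure_pmf.expectation (map_pmf (\<lambda>tr. N_at tr (Suc t)) (backward_traj m mu lam h (Suc t))) real"
      by simp
    also have "\<dots> = measure_pmf.expectation (map_pmf ?X ?F) real" unfolding law ..
    also have "\<dots> = measure_pmf.expectation ?F (\<lambda>tr. real (?X tr))" by simp
    finally show ?thesis .
  qed
  have Ef: "measure_pmf.expectation ?F (\<lambda>tr. real (N_at tr (Suc t)))
      = measure_pmf.expectation ?F (\<lambda>tr. real (?X tr) - real (?D tr))"
    by (rule integral_cong_AE) (auto intro!: AE_pmfI dest: st simp: of_nat_diff)
  also have "\<dots> = measure_pmf.expectation ?F (\<lambda>tr. real (?X tr)) - measure_pmf.expectation ?F (\<lambda>tr. real (?D tr))"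
    by (rule Bochner_Integration.integral_diff[OF intX intD])
  finally have Ef': "measure_pmf.expectation ?F (\<lambda>tr. real (N_at tr (Suc t)))
      = measure_pmf.expectation ?F (\<lambda>tr. real (?X tr)) - measure_pmf.expectation ?F (\<lambda>tr. real (?D tr))" .
  have e1: "\<tau> + 1 = Suc (Suc t)" "\<tau> - 1 = t" using tau by simp_all
  show ?thesis unfolding e1 unfolding tau using p1 Eb Ef' by simp
qed


end
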